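(* Let $q$ be a prime power, $n$ a positive integer with $\gcd(q,n)=1$, $P\subseteq\mathbb{Z}_n$ a $\mu_q$-invariant subset, $s\in\mathbb{Z}_n^*$ and $t\in\mathbb{Z}_n$ with $qt\equiv t\pmod n$. Then $\varphi_{s,t}(C_P)=C_{\rho_{s,t}(P)}$.
   Context: $R_n=\mathbb{F}_q[X]/\langle X^n-1\rangle$; cyclic codes are ideals of $R_n$. Fix a primitive $n$-th root of unity $\theta$ in an extension of $\mathbb{F}_q$. $\mu_q:\mathbb{Z}_n\to\mathbb{Z}_n$, $i\mapsto qi\bmod n$; $P$ is $\mu_q$-invariant if $\mu_q(P)=P$. For such $P$, $f_P(X)=\prod_{i\in P}(X-\theta^i)\in\mathbb{F}_q[X]$ and $C_P$ is the ideal of $R_n$ generated by $(X^n-1)/f_P(X)$ (the cyclic code with check polynomial $f_P$). $\rho_{s,t}:\mathbb{Z}_n\to\mathbb{Z}_n$, $i\mapsto s(i+t)\bmod n$ (it maps $\mu_q$-invariant sets to $\mu_q$-invariant sets). $\varphi_{s,t}:R_n\to R_n$, $a(X)\mapsto a(\theta^{-t}X^{s^{-1}})\bmod(X^n-1)$, where $s^{-1}$ is a positive integer with $ss^{-1}\equiv1\pmod n$ (note $\theta^{-t}\in\mathbb{F}_q$). *)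

theory Defs
  imports "HOL-Computational_Algebra.Polynomial" "HOL-Number_Theory.Cong"
begin

text \<open>Elements of R_n = F_q[X]/(X^n - 1) are represented by their canonical
 representatives: polynomials over F_q of degree < n (reduction = mod (X^n - 1)).\<close>

definition xn1 :: "nat \<Rightarrow> 'a::field poly" where
  "xn1 n = monom 1 n - 1"

definition mu_invariant :: "nat \<Rightarrow> nat \<Rightarrow> nat set \<Rightarrow> bool" where
  "mu_invariant q n P \<longleftrightarrow> P \<subseteq> {..<n} \<and> (\<lambda>i. q * i mod n) ` P = P"

definition rho :: "nat \<Rightarrow> nat \<Rightarrow> nat \<Rightarrow> nat \<Rightarrow> nat" where
  "rho n s t i = s * (i + t) mod n"

definition fP_ext :: "'b::field \<Rightarrow> nat set \<Rightarrow> 'b poly" where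
  "fP_ext \<theta> P = (\<Prod>i\<in>P. [:- (\<theta> ^ i), 1:])"

definition fP :: "('a::field \<Rightarrow> 'b::field) \<Rightarrow> 'b \<Rightarrow> nat set \<Rightarrow> 'a poly" where
  "fP emb \<theta> P = (THE p. map_poly emb p = fP_ext \<theta> P)"

definition cyc_code :: "('a::field \<Rightarrow> 'b::field) \<Rightarrow> 'b \<Rightarrow> nat \<Rightarrow> nat set \<Rightarrow> 'a poly set" where
  "cyc_code emb \<theta> n P = {((xn1 n div fP emb \<theta> P) * b) mod xn1 n | b. True}"

text \<open>phi_{s,t}: a(X) \<mapsto> a(theta^(-t) X^(s')) mod (X^n - 1), where s' is the chosen
 positive inverse of s mod n and theta^(-t) is viewed as an element of F_q.\<close>
definition phi :: "('a::field \<Rightarrow> 'b::field) \<Rightarrow> 'b \<Rightarrow> nat \<Rightarrow> nat \<Rightarrow> nat \<Rightarrow> 'a poly \<Rightarrow> 'a poly" where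
  "phi emb \<theta> n s' t a =
     pcompose a (monom (THE c. emb c = inverse (\<theta> ^ t)) s') mod xn1 n"

end

theory Submission
  imports Defs
begin


definition rhom :: "('c::comm_ring_1 \<Rightarrow> 'd::comm_ring_1) \<Rightarrow> bool" where
  "rhom h \<longleftrightarrow> h 0 = 0 \<and> h 1 = 1 \<and> (\<forall>x y. h (x+y) = h x + h y) \<and> (\<forall>x y. h (x*y) = h x * h y)"

context fixes h :: "'c::comm_ring_1 \<Rightarrow> 'd::comm_ring_1" assumes H: "rhom h"
begin
lemma rh0[simp]: "h 0 = 0" and rh1[simp]: "h 1 = 1" and rhadd[simp]: "h (x+y) = h x + h y"
  and rhmult[simp]: "h (x*y) = h x * h y" using H by (auto simp: rhom_def)
lemma rhminus[simp]: "h (-x) = - h x"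
proof -
  have "h (-x) + h x = 0" using rhadd[of "-x" x] by simp
  then show ?thesis by (simp add: eq_neg_iff_add_eq_0)
qed
lemma rhdiff[simp]: "h (x - y) = h x - h y"
  by (metis diff_conv_add_uminus rhadd rhminus)
lemma rhpow[simp]: "h (x ^ k) = h x ^ k" by (induct k) auto
lemma mp_add[simp]: "map_poly h (p + q) = map_poly h p + map_poly h q"
  by (rule poly_eqI) (simp add: coeff_map_poly)
lemma mp_minus[simp]: "map_poly h (- p) = - map_poly h p"
  by (rule poly_eqI) (simp add: coeff_map_poly)
lemma mp_diff[simp]: "map_poly h (p - q) = map_poly h p - map_poly h q"
  by (rule poly_eqI) (simp add: coeff_map_poly)
lemma mp_smult[simp]: "map_poly h (smult a p) = smult (h a) (map_poly h p)"
  by (rule poly_eqI) (simp add: coeff_map_poly)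
lemma mp_pCons[simp]: "map_poly h (pCons a p) = pCons (h a) (map_poly h p)"
  by (simp add: map_poly_pCons)
lemma mp_mult[simp]: "map_poly h (p * q) = map_poly h p * map_poly h q"
  by (induct p) (auto simp: mult_pCons_left)
lemma mp_one[simp]: "map_poly h 1 = 1" by simp
lemma mp_pow[simp]: "map_poly h (p ^ k) = map_poly h p ^ k" by (induct k) auto
lemma mp_prod: "map_poly h (\<Prod>i\<in>A. f i) = (\<Prod>i\<in>A. map_poly h (f i))"
  by (induct A rule: infinite_finite_induct) auto
lemma mp_monom[simp]: "map_poly h (monom c k) = monom (h c) k"
  by (simp add: map_poly_monom)
lemma mp_pcompose: "map_poly h (pcompose p r) = pcompose (map_poly h p) (map_poly h r)"
  by (induct p) (auto simp: pcompose_pCons)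
lemma mp_const[simp]: "map_poly h [:c:] = [:h c:]" by simp
end

lemma mp_xn1[simp]: "rhom (h::'a::field\<Rightarrow>'b::field) \<Longrightarrow> map_poly h (xn1 n) = xn1 n" by (simp add: xn1_def)

context fixes h :: "'a::field \<Rightarrow> 'b::field" assumes H: "rhom h" and I: "inj h"
begin
lemma fh_nz: "x \<noteq> 0 \<Longrightarrow> h x \<noteq> 0"
  using I H by (metis injD rh0)
lemma fh_inverse[simp]: "h (inverse x) = inverse (h x)"
proof (cases "x = 0")
  case True then show ?thesis using H by simp
next
  case False
  have "h x * h (inverse x) = 1" using H False by (metis rhmult rh1 right_inverse)
  then show ?thesis by (metis inverse_unique)
qed
lemma fmp_eq0[simp]: "map_poly h p = 0 \<longleftrightarrow> p = 0"
  by (rule map_poly_eq_0_iff) (use H fh_nz in auto)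
lemma fmp_degree[simp]: "degree (map_poly h p) = degree p"
  by (rule degree_map_poly) (use fh_nz in auto)
lemma fmp_inj: "map_poly h p = map_poly h r \<Longrightarrow> p = r"
  using mp_diff[OF H, of p r] fmp_eq0[of "p - r"] by simp
lemma fmp_dvd:
  assumes "map_poly h f dvd map_poly h a" "f \<noteq> 0"
  shows "f dvd a"
proof -
  have e: "a = f * (a div f) + a mod f" by simp
  have "map_poly h a = map_poly h f * map_poly h (a div f) + map_poly h (a mod f)"
  proof -
    have "map_poly h (f * (a div f) + a mod f) = map_poly h f * map_poly h (a div f) + map_poly h (a mod f)"
      by (simp only: mp_add[OF H] mp_mult[OF H])
    thus ?thesis by (metis e)
  qed
  hence "map_poly h f dvd map_poly h (a mod f)" using assms(1)
    by (metis add_diff_cancel_left' dvd_diff dvd_triv_left)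
  moreover have "a mod f = 0 \<or> degree (a mod f) < degree f" using degree_mod_less assms(2) by blast
  ultimately have "a mod f = 0"
    by (metis dvd_imp_degree_le fmp_degree fmp_eq0 not_le)
  thus ?thesis by (simp add: mod_eq_0_iff_dvd)
qed
end



lemma ff_pow: "(x::'a::{field,finite}) ^ card (UNIV :: 'a set) = x"
proof (cases "x = 0")
  case False
  have "x * (\<Prod>y\<in>UNIV-{0}. x * y) = x * x ^ (card (UNIV :: 'a set) - 1) * \<Prod>(UNIV-{0})"
    by (simp add: prod.distrib mult_ac)
  also have "x * x ^ (card (UNIV :: 'a set) - 1) = x ^ Suc (card (UNIV :: 'a set) - 1)"
    by (subst power_Suc) auto
  also have "Suc (card (UNIV :: 'a set) - 1) = card (UNIV :: 'a set)"
    using finite_UNIV_card_ge_0[where ?'a = 'a] by simp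
  also have "(\<Prod>y\<in>UNIV-{0}. x * y) = (\<Prod>y\<in>UNIV-{0}. y)"
    by (rule prod.reindex_bij_witness[of _ "\<lambda>y. y / x" "\<lambda>y. x * y"]) (use False in auto)
  finally show ?thesis
    by simp
qed (use finite_UNIV_card_ge_0[where ?'a = 'a] in auto)

lemma ff_card2: "card (UNIV :: 'a::{field,finite} set) \<ge> 2"
proof -
  have "card {0, 1::'a} \<le> card (UNIV :: 'a set)" by (rule card_mono) auto
  thus ?thesis by simp
qed

lemma ff_poly_frob: "([:1,1:] :: 'a::{field,finite} poly) ^ card (UNIV :: 'a set) = monom 1 (card (UNIV :: 'a set)) + 1"
proof -
  define q where "q = card (UNIV :: 'a set)"
  have q2: "q \<ge> 2" using ff_card2 q_def by metis
  define R :: "'a poly" where "R = [:1,1:] ^ q - monom 1 q - 1"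
  have dR: "degree R \<le> q - 1"
  proof (rule degree_le, intro allI impI)
    fix i assume "q - 1 < i"
    hence i: "i \<ge> q" by auto
    have c1: "coeff (([:1,1:]::'a poly) ^ q) i = (if i = q then 1 else 0)"
    proof (cases "i = q")
      case True
      have "lead_coeff (([:1,1:]::'a poly) ^ q) = 1" by (simp add: lead_coeff_power)
      hence "coeff (([:1,1:]::'a poly) ^ q) q = 1" using degree_linear_power[of "1::'a" q] by metis
      thus ?thesis using True by simp
    next
      case False
      thus ?thesis using i degree_linear_power[of "1::'a" q] by (simp add: coeff_eq_0)
    qed
    show "coeff R i = 0" using c1 i q2 by (auto simp: R_def coeff_monom)
  qed
  have "R = 0"
  proof (rule poly_eqI_degree[where A = UNIV])
    fix x :: 'a
    show "poly R x = poly 0 x"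
      using ff_pow[of "1 + x"] ff_pow[of x] by (simp add: R_def q_def poly_monom)
  qed (use dR q2 q_def in auto)
  thus ?thesis unfolding R_def q_def by (simp add: algebra_simps)
qed

context fixes emb :: "'a::{field,finite} \<Rightarrow> 'b::field" assumes H: "rhom emb" and I: "inj emb"
begin

lemma frob_range:
  assumes "z ^ card (UNIV :: 'a set) = z"
  shows "z \<in> range emb"
proof (rule ccontr)
  define q where "q = card (UNIV :: 'a set)"
  have q2: "q \<ge> 2" using ff_card2 q_def by metis
  assume nz: "z \<notin> range emb"
  define Q :: "'b poly" where "Q = monom 1 q - [:0,1:]"
  have dQ: "degree Q = q" unfolding Q_def using q2
    by (simp only: diff_conv_add_uminus, subst degree_add_eq_left) (auto simp: degree_monom_eq)
  hence Q0: "Q \<noteq> 0" using q2 by auto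
  have ep: "emb x ^ q = emb x" for x by (metis rhpow[OF H] ff_pow q_def)
  have sub: "insert z (range emb) \<subseteq> {x. poly Q x = 0}"
    using assms ep by (auto simp: Q_def poly_monom q_def)
  have "card (insert z (range emb)) = Suc q"
    using nz I by (simp add: card_image q_def)
  also have "\<dots> > card {x. poly Q x = 0}"
    using card_poly_roots_bound[OF Q0] dQ by simp
  finally have "card {x. poly Q x = 0} < card (insert z (range emb))" .
  moreover have "card (insert z (range emb)) \<le> card {x. poly Q x = 0}"
    by (rule card_mono[OF poly_roots_finite[OF Q0] sub])
  ultimately show False by simp
qed

lemma frob_add: "(x + y :: 'b) ^ card (UNIV :: 'a set) = x ^ card (UNIV :: 'a set) + y ^ card (UNIV :: 'a set)"
proof -
  define q where "q = card (UNIV :: 'a set)"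
  have q2: "q \<ge> 2" using ff_card2 q_def by metis
  have P: "([:1,1:] :: 'b poly) ^ q = monom 1 q + 1"
    using arg_cong[OF ff_poly_frob, of "map_poly emb"] H unfolding q_def
    by (simp add: H)
  have z: "(z + 1) ^ q = z ^ q + 1" for z :: 'b
    using arg_cong[OF P, of "\<lambda>p. poly p z"] by (simp add: poly_monom add.commute)
  show ?thesis
  proof (cases "y = 0")
    case True thus ?thesis using q2 q_def by simp
  next
    case False
    have "x + y = y * (x / y + 1)" using False by (simp add: field_simps)
    hence "(x + y) ^ q = y ^ q * ((x/y) ^ q + 1)" by (simp add: power_mult_distrib z)
    also have "\<dots> = x ^ q + y ^ q" using False by (simp add: field_simps power_divide)
    finally show ?thesis unfolding q_def .
  qed
qed
end


lemma prod_roots_dvd: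
  fixes p :: "'b::field poly"
  assumes "finite S" "inj_on r S" "\<forall>x\<in>S. poly p (r x) = 0"
  shows "(\<Prod>x\<in>S. [:- r x, 1:]) dvd p"
  using assms
proof (induction S arbitrary: p rule: finite_induct)
  case empty thus ?case by simp
next
  case (insert x S)
  then obtain k where k: "p = (\<Prod>y\<in>S. [:- r y, 1:]) * k" by (auto elim!: dvdE)
  have "poly (\<Prod>y\<in>S. [:- r y, 1:]) (r x) \<noteq> 0"
    using insert(1,2,4) by (auto simp: poly_prod prod_zero_iff)
  moreover have "poly p (r x) = 0" using insert by auto
  ultimately have "poly k (r x) = 0" using k by simp
  then obtain k' where "k = [:- r x, 1:] * k'" by (auto simp: poly_eq_0_iff_dvd elim!: dvdE)
  hence "p = ([:- r x, 1:] * (\<Prod>y\<in>S. [:- r y, 1:])) * k'" using k by (metis mult.assoc mult.commute)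
  moreover have "(\<Prod>y\<in>insert x S. [:- r y, 1:]) = [:- r x, 1:] * (\<Prod>y\<in>S. [:- r y, 1:])"
    using insert(1,2) by simp
  ultimately show ?case by (metis dvdI)
qed

lemma frob_rhom:
  assumes "rhom (emb :: 'a::{field,finite} \<Rightarrow> 'b::field)" "inj emb"
  shows "rhom (\<lambda>x::'b. x ^ card (UNIV :: 'a set))"
  using frob_add[OF assms] ff_card2[where 'a='a]
  unfolding rhom_def by (auto simp: power_mult_distrib)

lemma degree_xn1: "n > 0 \<Longrightarrow> degree (xn1 n :: 'a::field poly) = n"
  unfolding xn1_def
  by (simp only: diff_conv_add_uminus, subst degree_add_eq_left) (auto simp: degree_monom_eq)

lemma xn1_nz: "n > 0 \<Longrightarrow> (xn1 n :: 'a::field poly) \<noteq> 0"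
  using degree_xn1[of n] by (metis degree_0 less_irrefl)

locale cc =
  fixes emb :: "'a::{field,finite} \<Rightarrow> 'b::field" and \<theta> :: 'b and q n :: nat
  assumes H: "rhom emb" and I: "inj emb" and q_def: "q = card (UNIV :: 'a set)"
    and n_pos: "n > 0" and theta_root: "\<theta> ^ n = 1"
    and theta_prim: "\<And>k. 0 < k \<Longrightarrow> k < n \<Longrightarrow> \<theta> ^ k \<noteq> 1"
begin

lemma th_mod: "\<theta> ^ k = \<theta> ^ (k mod n)"
proof -
  have "\<theta> ^ k = \<theta> ^ (n * (k div n) + k mod n)" by simp
  also have "\<dots> = \<theta> ^ (k mod n)" by (simp only: power_add power_mult theta_root power_one mult_1)
  finally show ?thesis .
qed

lemma th_cong: "[a = b] (mod n) \<Longrightarrow> \<theta> ^ a = \<theta> ^ b"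
  by (metis th_mod cong_def)

lemma th_nz: "\<theta> \<noteq> 0"
  using theta_root n_pos by (metis power_0_left zero_neq_one not_gr0)

lemma th_inj: "i < n \<Longrightarrow> j < n \<Longrightarrow> \<theta> ^ i = \<theta> ^ j \<Longrightarrow> i = j"
proof (induction i j rule: linorder_wlog)
  case (le a b)
  show ?case
  proof (rule ccontr)
    assume "a \<noteq> b"
    hence "0 < b - a" "b - a < n" using le by auto
    hence "\<theta> ^ (b - a) \<noteq> 1" by (rule theta_prim)
    moreover have "\<theta> ^ b = \<theta> ^ a * \<theta> ^ (b - a)" using le(1) by (simp flip: power_add)
    ultimately show False using le th_nz by simp
  qed
qed auto

lemma th_inj_on: "inj_on (\<lambda>j. \<theta> ^ j) A" if "A \<subseteq> {..<n}"
  using th_inj that by (auto simp: inj_on_def)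

lemma xn1_prod: "(xn1 n :: 'b poly) = (\<Prod>j<n. [:- (\<theta> ^ j), 1:])"
proof -
  define Pr where "Pr = (\<Prod>j<n. [:- (\<theta> ^ j), 1:])"
  have dP: "degree Pr = n" unfolding Pr_def by (subst degree_prod_eq_sum_degree) auto
  have lP: "lead_coeff Pr = 1" unfolding Pr_def by (simp add: lead_coeff_prod)
  have dX: "degree (xn1 n :: 'b poly) = n" using degree_xn1 n_pos by blast
  have lX: "coeff (xn1 n :: 'b poly) n = 1" using n_pos by (simp add: xn1_def)
  define D where "D = xn1 n - Pr"
  have dD: "degree D \<le> n - 1"
  proof (rule degree_le, intro allI impI)
    fix i assume "n - 1 < i"
    hence "i \<ge> n" by auto
    thus "coeff D i = 0" unfolding D_def using dP lP dX lX
      by (cases "i = n") (auto simp: coeff_eq_0)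
  qed
  have "D = 0"
  proof (rule poly_eqI_degree[where A = "(\<lambda>j. \<theta> ^ j) ` {..<n}"])
    fix x assume "x \<in> (\<lambda>j. \<theta> ^ j) ` {..<n}"
    then obtain j where j: "j < n" "x = \<theta> ^ j" by auto
    have "poly (xn1 n) x = 0" using j theta_root
      by (simp add: xn1_def poly_monom flip: power_mult) (metis mult.commute power_mult power_one)
    moreover have "poly Pr x = 0" using j unfolding Pr_def by (auto simp: poly_prod)
    ultimately show "poly D x = poly 0 x" by (simp add: D_def)
  next
    show "degree D < card ((\<lambda>j. \<theta> ^ j) ` {..<n})" using dD n_pos th_inj_on[of "{..<n}"]
      by (simp add: card_image)
  qed (use n_pos th_inj_on[of "{..<n}"] in \<open>auto simp: card_image\<close>)
  thus ?thesis unfolding D_def Pr_def by simp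
qed


end




context cc
begin

lemma fP_map:
  assumes P: "mu_invariant q n P"
  shows "map_poly emb (fP emb \<theta> P) = fP_ext \<theta> P"
proof -
  define F where "F = fP_ext \<theta> P"
  define fr where "fr = (\<lambda>x::'b. x ^ q)"
  have R: "rhom fr" unfolding fr_def q_def by (rule frob_rhom[OF H I])
  have Psub: "P \<subseteq> {..<n}" and Pim: "(\<lambda>i. q * i mod n) ` P = P" using P by (auto simp: mu_invariant_def)
  have fin: "finite P" using Psub finite_subset by blast
  have inj: "inj_on (\<lambda>i. q * i mod n) P" using Pim fin by (intro eq_card_imp_inj_on) auto
  have "map_poly fr F = (\<Prod>i\<in>P. map_poly fr [:- (\<theta> ^ i), 1:])"
    unfolding F_def fP_ext_def by (rule mp_prod[OF R])
  also have "\<dots> = (\<Prod>i\<in>P. [:- ((\<theta> ^ i) ^ q), 1:])"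
    by (intro prod.cong refl) (simp add: mp_pCons[OF R] rhminus[OF R] rh1[OF R] rh0[OF R], simp add: fr_def)
  also have "\<dots> = (\<Prod>i\<in>P. [:- (\<theta> ^ (q * i mod n)), 1:])"
    by (intro prod.cong refl) (metis th_mod power_mult mult.commute)
  also have "\<dots> = (\<Prod>j\<in>(\<lambda>i. q * i mod n) ` P. [:- (\<theta> ^ j), 1:])"
    using prod.reindex[OF inj, of "\<lambda>j. [:- (\<theta> ^ j), 1:]"] by simp
  also have "\<dots> = F" unfolding F_def fP_ext_def Pim ..
  finally have fx: "map_poly fr F = F" .
  have cf: "coeff F k ^ q = coeff F k" for k
    using arg_cong[OF fx, of "\<lambda>p. coeff p k"] coeff_map_poly[of fr F k] rh0[OF R] by (simp add: fr_def)
  have inv0: "inv emb 0 = 0" using inv_f_f[OF I, of 0] rh0[OF H] by simp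
  define p where "p = map_poly (inv emb) F"
  have "map_poly emb p = map_poly (emb \<circ> inv emb) F"
    unfolding p_def by (rule map_poly_map_poly) (use inv0 H in auto)
  also have "\<dots> = F"
  proof (rule map_poly_idI)
    fix x assume "x \<in> set (coeffs F)"
    then obtain k where "x = coeff F k" by (auto simp: coeffs_def split: if_splits)
    hence "x ^ card (UNIV::'a set) = x" using cf q_def by simp
    hence "x \<in> range emb" by (rule frob_range[OF H I])
    thus "(emb \<circ> inv emb) x = x" by (auto simp: f_inv_into_f)
  qed
  finally have pF: "map_poly emb p = F" .
  have "fP emb \<theta> P = p" unfolding fP_def F_def[symmetric]
    by (rule the_equality) (use pF fmp_inj[OF H I] in auto)
  thus ?thesis using pF F_def by simp
qed

lemma fP_dvd:
  assumes P: "mu_invariant q n P"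
  shows "fP emb \<theta> P dvd xn1 n"
    and "map_poly emb (xn1 n div fP emb \<theta> P) = (\<Prod>j\<in>{..<n} - P. [:- (\<theta> ^ j), 1:])"
proof -
  have Psub: "P \<subseteq> {..<n}" using P by (auto simp: mu_invariant_def)
  have split: "(\<Prod>j<n. [:- (\<theta> ^ j), 1:]) = fP_ext \<theta> P * (\<Prod>j\<in>{..<n} - P. [:- (\<theta> ^ j), 1:])"
    using prod.subset_diff[OF Psub finite_lessThan, of "\<lambda>j. [:- (\<theta> ^ j), 1:]"] by (simp add: fP_ext_def mult.commute)
  have nz: "fP emb \<theta> P \<noteq> 0"
  proof
    assume "fP emb \<theta> P = 0"
    hence "fP_ext \<theta> P = 0" using fP_map[OF P] by simp
    hence "(\<Prod>j<n. [:- (\<theta> ^ j), 1:]) = 0" using split by simp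
    thus False by simp
  qed
  have "map_poly emb (fP emb \<theta> P) dvd map_poly emb (xn1 n)"
    unfolding fP_map[OF P] mp_xn1[OF H] xn1_prod split by simp
  thus d: "fP emb \<theta> P dvd xn1 n" by (rule fmp_dvd[OF H I _ nz])
  then obtain g where g: "xn1 n = fP emb \<theta> P * g" by (elim dvdE)
  hence gd: "xn1 n div fP emb \<theta> P = g" using nz by simp
  have "map_poly emb (xn1 n) = map_poly emb (fP emb \<theta> P) * map_poly emb g"
    using arg_cong[OF g, of "map_poly emb"] mp_mult[OF H] by simp
  hence "fP_ext \<theta> P * map_poly emb g = fP_ext \<theta> P * (\<Prod>j\<in>{..<n} - P. [:- (\<theta> ^ j), 1:])"
    unfolding fP_map[OF P] mp_xn1[OF H] xn1_prod split by auto
  moreover have "fP_ext \<theta> P \<noteq> 0" using nz fP_map[OF P] fmp_eq0[OF H I, of "fP emb \<theta> P"] by simp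
  ultimately show "map_poly emb (xn1 n div fP emb \<theta> P) = (\<Prod>j\<in>{..<n} - P. [:- (\<theta> ^ j), 1:])"
    using gd by simp
qed

lemma eval_mod: "poly (map_poly emb (a mod xn1 n)) (\<theta> ^ j) = poly (map_poly emb a) (\<theta> ^ j)"
proof -
  have x0: "poly (xn1 n :: 'b poly) (\<theta> ^ j) = 0"
    using xn1_prod by (simp add: poly_prod) (metis lessThan_iff mod_less_divisor n_pos th_mod)
  have "a mod xn1 n = a - xn1 n * (a div xn1 n)" by (metis minus_mult_div_eq_mod)
  hence "map_poly emb (a mod xn1 n) = map_poly emb a - xn1 n * map_poly emb (a div xn1 n)"
    using H by simp
  thus ?thesis using x0 by simp
qed

lemma code_iff:
  assumes P: "mu_invariant q n P"
  shows "a \<in> cyc_code emb \<theta> n P \<longleftrightarrow>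
     degree a < n \<and> (\<forall>j<n. j \<notin> P \<longrightarrow> poly (map_poly emb a) (\<theta> ^ j) = 0)"
proof
  assume "a \<in> cyc_code emb \<theta> n P"
  then obtain b where a: "a = (xn1 n div fP emb \<theta> P * b) mod xn1 n" by (auto simp: cyc_code_def)
  have "a = 0 \<or> degree a < degree (xn1 n :: 'a poly)"
    unfolding a by (rule degree_mod_less[OF xn1_nz[OF n_pos]])
  hence "degree a < n" using degree_xn1[OF n_pos] n_pos by (metis degree_0)
  moreover have "poly (map_poly emb a) (\<theta> ^ j) = 0" if "j < n" "j \<notin> P" for j
  proof -
    have "poly (map_poly emb a) (\<theta> ^ j) = poly (map_poly emb (xn1 n div fP emb \<theta> P * b)) (\<theta> ^ j)"
      unfolding a by (rule eval_mod)
    also have "\<dots> = 0" using fP_dvd(2)[OF P] that H by (auto simp: poly_prod)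
    finally show ?thesis .
  qed
  ultimately show "degree a < n \<and> (\<forall>j<n. j \<notin> P \<longrightarrow> poly (map_poly emb a) (\<theta> ^ j) = 0)" by blast
next
  assume A: "degree a < n \<and> (\<forall>j<n. j \<notin> P \<longrightarrow> poly (map_poly emb a) (\<theta> ^ j) = 0)"
  define g where "g = xn1 n div fP emb \<theta> P"
  have gnz: "g \<noteq> 0"
  proof
    assume "g = 0"
    hence "map_poly emb g = 0" by simp
    thus False using fP_dvd(2)[OF P] unfolding g_def by simp
  qed
  have "map_poly emb g dvd map_poly emb a"
    unfolding g_def fP_dvd(2)[OF P]
    by (rule prod_roots_dvd) (use A th_inj_on[of "{..<n} - P"] in auto)
  hence "g dvd a" by (rule fmp_dvd[OF H I _ gnz])
  then obtain b where "a = g * b" by (elim dvdE)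
  moreover have "a mod xn1 n = a" using A degree_xn1[OF n_pos, where 'a='a] by (intro mod_poly_less) auto
  ultimately have "a = (g * b) mod xn1 n" by simp
  thus "a \<in> cyc_code emb \<theta> n P" unfolding cyc_code_def g_def by blast
qed

end




context cc
begin

lemma deg_mod: "degree (x mod xn1 n :: 'a poly) < n"
proof -
  have "x mod xn1 n = 0 \<or> degree (x mod xn1 n) < degree (xn1 n :: 'a poly)"
    by (rule degree_mod_less[OF xn1_nz[OF n_pos]])
  thus ?thesis using degree_xn1[OF n_pos, where 'a='a] n_pos by (metis degree_0)
qed

lemma eval_comp: "poly (map_poly emb (pcompose x (monom d k) mod xn1 n)) (\<theta> ^ j)
   = poly (map_poly emb x) (emb d * \<theta> ^ (j * k))"
  unfolding eval_mod mp_pcompose[OF H] poly_pcompose mp_monom[OF H]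
  by (simp add: poly_monom power_mult)

lemma uniq:
  assumes "degree a < n" "degree b < n"
    "\<And>j. j < n \<Longrightarrow> poly (map_poly emb a) (\<theta> ^ j) = poly (map_poly emb b) (\<theta> ^ j)"
  shows "a = b"
proof -
  have c: "card ((\<lambda>j. \<theta> ^ j) ` {..<n}) = n" using th_inj_on[of "{..<n}"] by (simp add: card_image)
  have "map_poly emb a = map_poly emb b"
    by (rule poly_eqI_degree[where A = "(\<lambda>j. \<theta> ^ j) ` {..<n}"])
       (use assms c fmp_degree[OF H I] in auto)
  thus ?thesis by (rule fmp_inj[OF H I])
qed

lemma main:
  fixes s s' t :: nat and P :: "nat set"
  assumes P_inv: "mu_invariant q n P"
    and s_unit: "s < n" "coprime s n"
    and s'_inv: "s' > 0" "[s * s' = 1] (mod n)"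
    and t_range: "t < n"
    and t_cong: "[q * t = t] (mod n)"
  shows "phi emb \<theta> n s' t ` cyc_code emb \<theta> n P = cyc_code emb \<theta> n (rho n s t ` P)"
proof -
  have Psub: "P \<subseteq> {..<n}" and Pim: "(\<lambda>i. q * i mod n) ` P = P" using P_inv by (auto simp: mu_invariant_def)
  define r where "r = rho n s t"
  define \<sigma> where "\<sigma> = (\<lambda>j. (j * s' + (n - t)) mod n)"
  have r_lt: "r i < n" for i using n_pos by (simp add: r_def rho_def)
  have \<sigma>_lt: "\<sigma> j < n" for j using n_pos by (simp add: \<sigma>_def)
  have r\<sigma>: "r (\<sigma> j) = j" if "j < n" for j
  proof -
    have "r (\<sigma> j) = s * (j * s' + (n - t) + t) mod n"
      unfolding r_def rho_def \<sigma>_def by (metis mod_add_left_eq mod_mult_right_eq)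
    also have "j * s' + (n - t) + t = j * s' + n" using t_range by simp
    also have "s * (j * s' + n) = j * (s * s') + s * n" by (simp add: algebra_simps)
    also have "\<dots> mod n = (j * (s * s')) mod n" by simp
    also have "\<dots> = (j * 1) mod n" using s'_inv(2) unfolding cong_def by (metis mod_mult_right_eq)
    finally show ?thesis using that by simp
  qed
  have r_inj: "i = i'" if "i < n" "i' < n" "r i = r i'" for i i'
  proof -
    have "[s * (i + t) = s * (i' + t)] (mod n)" using that(3) by (simp add: r_def rho_def cong_def)
    hence "[i + t = i' + t] (mod n)" using s_unit(2) by (simp add: cong_mult_lcancel_nat)
    hence "[i = i'] (mod n)" by (simp add: cong_add_rcancel_nat)
    thus ?thesis using that cong_less_modulus_unique_nat by blast
  qed
  have rP_inv: "mu_invariant q n (r ` P)"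
  proof -
    have "q * r i mod n = r (q * i mod n)" for i
    proof -
      have "q * r i mod n = s * (q * i + q * t) mod n"
        unfolding r_def rho_def by (metis mod_mult_right_eq mult.left_commute distrib_left)
      also have "\<dots> = s * (q * i + t) mod n" using t_cong unfolding cong_def
        by (metis mod_add_right_eq mod_mult_right_eq)
      also have "\<dots> = r (q * i mod n)" unfolding r_def rho_def
        by (metis mod_add_left_eq mod_mult_right_eq)
      finally show ?thesis .
    qed
    hence "(\<lambda>i. q * i mod n) ` r ` P = r ` (\<lambda>i. q * i mod n) ` P" by (auto simp: image_image)
    thus ?thesis using Pim r_lt unfolding mu_invariant_def by auto
  qed
  have "(\<theta> ^ t) ^ card (UNIV :: 'a set) = \<theta> ^ t"
    using th_cong[OF t_cong] q_def by (simp flip: power_mult add: mult.commute)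
  hence "\<theta> ^ t \<in> range emb" by (rule frob_range[OF H I])
  then obtain c0 where c0: "emb c0 = \<theta> ^ t" by auto
  have cdef: "(THE c. emb c = inverse (\<theta> ^ t)) = inverse c0"
  proof (rule the_equality)
    show "emb (inverse c0) = inverse (\<theta> ^ t)" using fh_inverse[OF H I, of c0] c0 by simp
    fix c assume "emb c = inverse (\<theta> ^ t)"
    hence "emb c = emb (inverse c0)" using fh_inverse[OF H I, of c0] c0 by simp
    thus "c = inverse c0" using I by (simp add: inj_eq)
  qed
  have inv_t: "inverse (\<theta> ^ t) = \<theta> ^ (n - t)"
  proof -
    have "\<theta> ^ t * \<theta> ^ (n - t) = 1" using t_range theta_root by (simp flip: power_add)
    thus ?thesis by (metis inverse_unique)
  qed
  have phi_eq: "phi emb \<theta> n s' t a = pcompose a (monom (inverse c0) s') mod xn1 n" for a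
    unfolding phi_def cdef ..
  have phi_eval: "poly (map_poly emb (phi emb \<theta> n s' t a)) (\<theta> ^ j) = poly (map_poly emb a) (\<theta> ^ \<sigma> j)" for a j
  proof -
    have "emb (inverse c0) * \<theta> ^ (j * s') = \<theta> ^ (j * s' + (n - t))"
      using fh_inverse[OF H I] c0 inv_t by (simp add: power_add mult.commute)
    also have "\<dots> = \<theta> ^ \<sigma> j" unfolding \<sigma>_def by (rule th_mod)
    finally show ?thesis unfolding phi_eq eval_comp by simp
  qed
  show ?thesis
  proof
    show "phi emb \<theta> n s' t ` cyc_code emb \<theta> n P \<subseteq> cyc_code emb \<theta> n (rho n s t ` P)"
    proof
      fix b assume "b \<in> phi emb \<theta> n s' t ` cyc_code emb \<theta> n P"
      then obtain a where a: "a \<in> cyc_code emb \<theta> n P" and b: "b = phi emb \<theta> n s' t a" by auto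
      have A: "\<forall>j<n. j \<notin> P \<longrightarrow> poly (map_poly emb a) (\<theta> ^ j) = 0" using a code_iff[OF P_inv] by blast
      have "poly (map_poly emb b) (\<theta> ^ j) = 0" if "j < n" "j \<notin> r ` P" for j
      proof -
        have "\<sigma> j \<notin> P" using that r\<sigma> by (metis image_eqI)
        thus ?thesis using A \<sigma>_lt b phi_eval by simp
      qed
      moreover have "degree b < n" unfolding b phi_eq by (rule deg_mod)
      ultimately show "b \<in> cyc_code emb \<theta> n (rho n s t ` P)"
        using code_iff[OF rP_inv] unfolding r_def by blast
    qed
  next
    show "cyc_code emb \<theta> n (rho n s t ` P) \<subseteq> phi emb \<theta> n s' t ` cyc_code emb \<theta> n P"
    proof
      fix b assume "b \<in> cyc_code emb \<theta> n (rho n s t ` P)"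
      hence B: "degree b < n" "\<forall>j<n. j \<notin> r ` P \<longrightarrow> poly (map_poly emb b) (\<theta> ^ j) = 0"
        using code_iff[OF rP_inv] unfolding r_def by blast+
      define a where "a = pcompose b (monom (c0 ^ s) s) mod xn1 n"
      have a_eval: "poly (map_poly emb a) (\<theta> ^ i) = poly (map_poly emb b) (\<theta> ^ r i)" for i
      proof -
        have "emb (c0 ^ s) * \<theta> ^ (i * s) = \<theta> ^ (s * (i + t))"
          using c0 rhpow[OF H] by (simp add: power_add algebra_simps flip: power_mult)
        also have "\<dots> = \<theta> ^ r i" unfolding r_def rho_def by (rule th_mod)
        finally show ?thesis unfolding a_def eval_comp by simp
      qed
      have "a \<in> cyc_code emb \<theta> n P"
      proof -
        have "poly (map_poly emb a) (\<theta> ^ i) = 0" if "i < n" "i \<notin> P" for i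
        proof -
          have "r i \<notin> r ` P"
          proof
            assume "r i \<in> r ` P"
            then obtain i' where "i' \<in> P" "r i = r i'" by auto
            hence "i = i'" using r_inj that Psub by auto
            thus False using that \<open>i' \<in> P\<close> by simp
          qed
          thus ?thesis using B r_lt a_eval by simp
        qed
        moreover have "degree a < n" unfolding a_def by (rule deg_mod)
        ultimately show ?thesis using code_iff[OF P_inv] by blast
      qed
      moreover have "phi emb \<theta> n s' t a = b"
      proof (rule uniq)
        show "degree (phi emb \<theta> n s' t a) < n" unfolding phi_eq by (rule deg_mod)
        show "degree b < n" by (rule B(1))
        fix j assume "j < n"
        thus "poly (map_poly emb (phi emb \<theta> n s' t a)) (\<theta> ^ j) = poly (map_poly emb b) (\<theta> ^ j)"
          using phi_eval a_eval r\<sigma> by simp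
      qed
      ultimately show "b \<in> phi emb \<theta> n s' t ` cyc_code emb \<theta> n P" by (metis image_eqI)
    qed
  qed
qed

end


theorem theorem2p10:
  fixes emb :: "'a::{field,finite} \<Rightarrow> 'b::field"
    and \<theta> :: 'b and q n s s' t :: nat and P :: "nat set"
  assumes q_def: "q = card (UNIV :: 'a set)"
    and emb_inj: "inj emb"
    and emb_add: "\<And>x y. emb (x + y) = emb x + emb y"
    and emb_mult: "\<And>x y. emb (x * y) = emb x * emb y"
    and emb_one: "emb 1 = 1"
    and n_pos: "n > 0"
    and coprime_qn: "coprime q n"
    and theta_root: "\<theta> ^ n = 1"
    and theta_prim: "\<And>k. 0 < k \<Longrightarrow> k < n \<Longrightarrow> \<theta> ^ k \<noteq> 1"
    and P_inv: "mu_invariant q n P"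
    and s_unit: "s < n" "coprime s n"
    and s'_inv: "s' > 0" "[s * s' = 1] (mod n)"
    and t_range: "t < n"
    and t_cong: "[q * t = t] (mod n)"
  shows "phi emb \<theta> n s' t ` cyc_code emb \<theta> n P = cyc_code emb \<theta> n (rho n s t ` P)"
proof -
  have e0: "emb 0 = 0" using emb_add[of 0 0] by (metis add.right_neutral add_left_cancel)
  have H: "rhom emb" unfolding rhom_def using e0 emb_one emb_add emb_mult by blast
  interpret cc emb \<theta> q n
    by unfold_locales (use H emb_inj q_def n_pos theta_root theta_prim in auto)
  show ?thesis by (rule main[OF P_inv s_unit s'_inv t_range t_cong])
qed

end
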